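(* Let $(X,d_X)$ be an ultrametric space and let $Y$ be any separable metrizable space. Then a function $f: X \to Y$ is of Baire class $1$ if and only if $f$ is the pointwise limit of a sequence of full functions from $X$ to $Y$.
   Context: Work in ZF plus countable choice over the reals. A function $f:X\to Y$ between metrizable spaces is of Baire class $1$ if $f^{-1}(U)\in\mathbf{\Sigma}^0_2(X)$ for every open $U\subseteq Y$. In an ultrametric space $(X,d_X)$, a set $A\subseteq X$ is full with constant $r>0$ if for every $x\in A$ the open ball $B(x,r)=\{y\in X: d_X(x,y)<r\}$ is contained in $A$; $A$ is full if it is full with some constant $r>0$. A function $f:X\to Y$ is full if it takes only finitely many values and the preimage of each of these values is a full subset of $X$. *)

theory Defs
  imports "HOL-Analysis.Analysis"
begin

definition ultrametric_space :: "'a set \<Rightarrow> ('a \<Rightarrow> 'a \<Rightarrow> real) \<Rightarrow> bool" where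
  "ultrametric_space M d \<longleftrightarrow> Metric_space M d \<and>
     (\<forall>x\<in>M. \<forall>y\<in>M. \<forall>z\<in>M. d x z \<le> max (d x y) (d y z))"

definition baire_class_1 :: "'a topology \<Rightarrow> 'b topology \<Rightarrow> ('a \<Rightarrow> 'b) \<Rightarrow> bool" where
  "baire_class_1 X Y f \<longleftrightarrow>
     (\<forall>U. openin Y U \<longrightarrow> fsigma_in X {x \<in> topspace X. f x \<in> U})"

definition full_set_with :: "'a set \<Rightarrow> ('a \<Rightarrow> 'a \<Rightarrow> real) \<Rightarrow> real \<Rightarrow> 'a set \<Rightarrow> bool" where
  "full_set_with M d r A \<longleftrightarrow> A \<subseteq> M \<and> r > 0 \<and> (\<forall>x\<in>A. {y \<in> M. d x y < r} \<subseteq> A)"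

definition full_set :: "'a set \<Rightarrow> ('a \<Rightarrow> 'a \<Rightarrow> real) \<Rightarrow> 'a set \<Rightarrow> bool" where
  "full_set M d A \<longleftrightarrow> (\<exists>r>0. full_set_with M d r A)"

definition full_function :: "'a set \<Rightarrow> ('a \<Rightarrow> 'a \<Rightarrow> real) \<Rightarrow> 'b topology \<Rightarrow> ('a \<Rightarrow> 'b) \<Rightarrow> bool" where
  "full_function M d Y g \<longleftrightarrow> g \<in> M \<rightarrow> topspace Y \<and> finite (g ` M) \<and>
     (\<forall>y \<in> g ` M. full_set M d {x \<in> M. g x = y})"

end

theory Submission
  imports Defs
begin


lemma level_open:
  assumes "Metric_space M d" "full_function M d Y g"
  shows "openin (Metric_space.mtopology M d) {x\<in>M. g x \<in> S}"
proof -
  interpret X: Metric_space M d by fact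
  show ?thesis unfolding X.openin_mtopology
  proof (intro conjI allI impI)
    show "{x\<in>M. g x \<in> S} \<subseteq> M" by auto
    fix x assume x: "x \<in> {x\<in>M. g x \<in> S}"
    then have "g x \<in> g ` M" by auto
    with assms(2) obtain r where r: "full_set_with M d r {z\<in>M. g z = g x}"
      unfolding full_function_def full_set_def by blast
    then have "{y\<in>M. d x y < r} \<subseteq> {z\<in>M. g z = g x}" using x unfolding full_set_with_def by blast
    then have "X.mball x r \<subseteq> {x\<in>M. g x \<in> S}" using x by fastforce
    moreover have "r > 0" using r full_set_with_def by auto
    ultimately show "\<exists>r>0. X.mball x r \<subseteq> {x\<in>M. g x \<in> S}" by blast
  qed
qed

lemma level_closed:
  assumes "Metric_space M d" "full_function M d Y g"
  shows "closedin (Metric_space.mtopology M d) {x\<in>M. g x \<in> S}"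
proof -
  interpret X: Metric_space M d by fact
  have "M - {x\<in>M. g x \<in> S} = {x\<in>M. g x \<in> -S}" by auto
  then show ?thesis unfolding closedin_def using level_open[OF assms, of "-S"] by auto
qed

lemma backward:
  assumes MX: "Metric_space M d" and MY: "Metric_space Ty m" and Yeq: "Y = Metric_space.mtopology Ty m"
    and full: "\<forall>n. full_function M d Y (g n)"
    and lim: "\<forall>x\<in>M. limitin Y (\<lambda>n. g n x) (f x) sequentially"
  shows "baire_class_1 (Metric_space.mtopology M d) Y f"
proof -
  interpret X: Metric_space M d by fact
  interpret Y: Metric_space Ty m by fact
  have gT: "g n x \<in> Ty" if "x \<in> M" for n x
    using full that unfolding full_function_def Yeq by auto
  have lim': "f x \<in> Ty \<and> (\<forall>\<epsilon>>0. eventually (\<lambda>n. g n x \<in> Ty \<and> m (g n x) (f x) < \<epsilon>) sequentially)"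
    if "x \<in> M" for x
    using lim that unfolding Yeq Y.limitin_metric by blast
  show ?thesis unfolding baire_class_1_def
  proof (intro allI impI)
    fix U assume U: "openin Y U"
    define CC where "CC k = {y\<in>Ty. \<forall>z\<in>Ty-U. m y z \<ge> 1/Suc k}" for k::nat
    define A where "A k N = (\<Inter>n\<in>{N..}. {x\<in>M. g n x \<in> CC k})" for k N :: nat
    have closedA: "closedin X.mtopology (A k N)" for k N
      unfolding A_def
      by (rule closedin_INT) (auto intro: level_closed[OF MX] full[rule_format])
    have eq: "{x\<in>topspace X.mtopology. f x \<in> U} = (\<Union>p\<in>UNIV. A (fst p) (snd p))"
    proof (intro equalityI subsetI)
      fix x assume "x \<in> {x\<in>topspace X.mtopology. f x \<in> U}"
      then have x: "x \<in> M" "f x \<in> U" by auto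
      have fx: "f x \<in> Ty" using lim' x by blast
      obtain r where r: "r > 0" "Y.mball (f x) r \<subseteq> U"
        using U x unfolding Yeq Y.openin_mtopology by blast
      obtain k where k: "inverse (of_nat (Suc k)) < r/2" using reals_Archimedean[of "r/2"] r by auto
      then have k': "2/Suc k < r" by (simp add: field_simps)
      obtain N where N: "\<And>n. n \<ge> N \<Longrightarrow> m (g n x) (f x) < 1/Suc k"
        using lim' x unfolding eventually_sequentially
        by (metis of_nat_0_less_iff zero_less_Suc zero_less_divide_1_iff)
      have key: "m (g n x) z \<ge> 1/Suc k" if n: "N \<le> n" and z: "z \<in> Ty" "z \<notin> U" for n z
      proof -
        have "m (f x) z \<ge> r" using r z fx by (meson Y.in_mball linorder_not_le subsetD)
        moreover have "m (f x) z \<le> m (f x) (g n x) + m (g n x) z"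
          using Y.triangle fx z gT x by blast
        moreover have "m (f x) (g n x) < 1/Suc k" using N[OF n] Y.commute by simp
        moreover have "2/Suc k = 2*(1/Suc k)" by simp
        ultimately show ?thesis using k' by linarith
      qed
      have "x \<in> A k N" unfolding A_def CC_def using key x gT by auto
      then show "x \<in> (\<Union>p\<in>UNIV. A (fst p) (snd p))" by auto
    next
      fix x assume "x \<in> (\<Union>p\<in>UNIV. A (fst p) (snd p))"
      then obtain k N where xA: "x \<in> A k N" by auto
      then have x: "x \<in> M" unfolding A_def by auto
      have fx: "f x \<in> Ty" using lim' x by blast
      have "f x \<in> U"
      proof (rule ccontr)
        assume nU: "f x \<notin> U"
        obtain N' where N': "\<And>n. n \<ge> N' \<Longrightarrow> m (g n x) (f x) < 1/Suc k"
          using lim' x unfolding eventually_sequentially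
          by (metis of_nat_0_less_iff zero_less_Suc zero_less_divide_1_iff)
        have "g (max N N') x \<in> CC k" using xA unfolding A_def by auto
        then have "m (g (max N N') x) (f x) \<ge> 1/Suc k" using nU fx unfolding CC_def by auto
        with N'[of "max N N'"] show False by simp
      qed
      then show "x \<in> {x\<in>topspace X.mtopology. f x \<in> U}" using x by auto
    qed
    show "fsigma_in X.mtopology {x\<in>topspace X.mtopology. f x \<in> U}"
      unfolding eq by (rule fsigma_in_Union) (auto intro: closed_imp_fsigma_in closedA)
  qed
qed



lemma full_from_sets:
  assumes gE: "\<And>x. x\<in>M \<Longrightarrow> g x = Phi (E x)" and ET: "\<And>x. x\<in>M \<Longrightarrow> E x \<subseteq> T"
    and fin: "finite T" and r: "r>0"
    and inv: "\<And>x y. x\<in>M \<Longrightarrow> y\<in>M \<Longrightarrow> d x y < r \<Longrightarrow> E y = E x"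
    and gY: "g \<in> M \<rightarrow> topspace Y"
  shows "full_function M d Y g"
  unfolding full_function_def full_set_def full_set_with_def
proof (intro conjI ballI)
  show "g \<in> M \<rightarrow> topspace Y" by fact
  have "g ` M \<subseteq> Phi ` Pow T" using gE ET by auto
  then show "finite (g ` M)" using fin by (meson finite_Pow_iff finite_imageI finite_subset)
  fix v assume "v \<in> g ` M"
  show "\<exists>r>0. {x \<in> M. g x = v} \<subseteq> M \<and> 0 < r \<and>
         (\<forall>x\<in>{x \<in> M. g x = v}. {y \<in> M. d x y < r} \<subseteq> {x \<in> M. g x = v})"
  proof (intro exI[of _ r] conjI ballI subsetI)
    fix x y assume x: "x \<in> {x \<in> M. g x = v}" and y: "y \<in> {y \<in> M. d x y < r}"
    then have "E y = E x" using inv by auto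
    then show "y \<in> {x \<in> M. g x = v}" using x y gE by auto
  qed (use r in auto)
qed

lemma core:
  fixes FF :: "nat \<Rightarrow> nat \<Rightarrow> 'a set" and cc :: "nat \<Rightarrow> nat \<Rightarrow> 'b" and f :: "'a \<Rightarrow> 'b"
  assumes U: "ultrametric_space M d" and MY: "Metric_space Ty m"
   and closedF: "\<And>k i. closedin (Metric_space.mtopology M d) (FF k i)"
   and cover: "\<And>k x. x\<in>M \<Longrightarrow> \<exists>i. x \<in> FF k i"
   and approx: "\<And>k i x. x \<in> FF k i \<Longrightarrow> m (cc k i) (f x) < 1/Suc k"
   and ccT: "\<And>k i. cc k i \<in> Ty" and y0: "y0 \<in> Ty" and fT: "\<And>x. x\<in>M \<Longrightarrow> f x \<in> Ty"
  shows "\<exists>g :: nat \<Rightarrow> 'a \<Rightarrow> 'b. (\<forall>n. full_function M d (Metric_space.mtopology Ty m) (g n)) \<and>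
     (\<forall>x\<in>M. limitin (Metric_space.mtopology Ty m) (\<lambda>n. g n x) (f x) sequentially)"
proof -
  have MX: "Metric_space M d" and ultra: "\<And>x y z. x\<in>M \<Longrightarrow> y\<in>M \<Longrightarrow> z\<in>M \<Longrightarrow> d x z \<le> max (d x y) (d y z)"
    using U unfolding ultrametric_space_def by auto
  interpret X: Metric_space M d by fact
  interpret Y: Metric_space Ty m by fact
  have FM: "FF k i \<subseteq> M" for k i using closedin_subset[OF closedF[of k i]] by simp
  define Nb where "Nb n F = {x\<in>M. \<exists>z\<in>F. d x z < 1/Suc n}" for n::nat and F
  define E where "E n x = {(k,i). k \<le> n \<and> i \<le> n \<and> x \<in> Nb n (FF k i)}" for n x
  define bb where "bb S k = (LEAST i. (k,i) \<in> S)" for S :: "(nat\<times>nat) set" and k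
  define ok where "ok n S k = (k \<le> n \<and> (\<forall>j\<le>k. (\<exists>i. (j,i)\<in>S) \<and> m (cc j (bb S j)) (cc k (bb S k)) \<le> 2/Suc j))" for n S k
  define Phi where "Phi n S = (if \<exists>k. ok n S k then cc (GREATEST k. ok n S k) (bb S (GREATEST k. ok n S k)) else y0)" for n S
  define g where "g n x = Phi n (E n x)" for n x
  have Nb_inv: "y \<in> Nb n F" if "x \<in> Nb n F" "x \<in> M" "y \<in> M" "d x y < 1/Suc n" "F \<subseteq> M" for x y n F
  proof -
    have "\<exists>z\<in>F. d x z < 1/Suc n" using that(1) unfolding Nb_def by blast
    then obtain z where z: "z \<in> F" "d x z < 1/Suc n" by blast
    have "d y z \<le> max (d y x) (d x z)" using ultra that z by blast
    moreover have "d y x = d x y" using X.commute by simp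
    ultimately have "d y z < 1/Suc n" using that z by simp
    then show ?thesis using z that unfolding Nb_def by auto
  qed
  have E_inv: "E n y = E n x" if "x \<in> M" "y \<in> M" "d x y < 1/Suc n" for x y n
  proof -
    have "d y x < 1/Suc n" using that X.commute by simp
    then have "y \<in> Nb n F \<longleftrightarrow> x \<in> Nb n F" if "F \<subseteq> M" for F
      using Nb_inv[of x n F y] Nb_inv[of y n F x] \<open>x \<in> M\<close> \<open>y \<in> M\<close> \<open>d x y < 1/Suc n\<close> that by blast
    then show ?thesis unfolding E_def using FM by auto
  qed
  have gT: "g n x \<in> Ty" for n x unfolding g_def Phi_def using ccT y0 by auto
  have full: "full_function M d (Metric_space.mtopology Ty m) (g n)" for n
  proof (rule full_from_sets[where Phi="Phi n" and E="E n" and T="{..n}\<times>{..n}" and r="1/Suc n"])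
    show "\<And>x. x \<in> M \<Longrightarrow> g n x = Phi n (E n x)" unfolding g_def by simp
    show "\<And>x. x \<in> M \<Longrightarrow> E n x \<subseteq> {..n} \<times> {..n}" unfolding E_def by auto
    show "\<And>x y. x \<in> M \<Longrightarrow> y \<in> M \<Longrightarrow> d x y < 1 / real (Suc n) \<Longrightarrow> E n y = E n x" by (rule E_inv)
    show "g n \<in> M \<rightarrow> topspace Y.mtopology" using gT by auto
  qed auto
  have conv: "limitin Y.mtopology (\<lambda>n. g n x) (f x) sequentially" if x: "x \<in> M" for x
  proof -
    define a where "a k = (LEAST i. x \<in> FF k i)" for k
    have ha: "x \<in> FF k (a k)" for k unfolding a_def using cover[OF x] by (rule LeastI_ex)
    have hlt: "x \<notin> FF k i" if "i < a k" for k i using that unfolding a_def by (rule not_less_Least)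
    have stab: "eventually (\<lambda>n. x \<notin> Nb n (FF k i)) sequentially" if nF: "x \<notin> FF k i" for k i
    proof -
      obtain r where r: "r > 0" "disjnt (FF k i) (X.mball x r)"
        using closedF[of k i] x nF unfolding X.closedin_metric by blast
      obtain n0 where n0: "inverse (of_nat (Suc n0)) < r" using reals_Archimedean r by blast
      show ?thesis unfolding eventually_sequentially
      proof (intro exI[of _ n0] allI impI)
        fix n assume n: "n0 \<le> n"
        have "1/Suc n \<le> 1/Suc n0" using n by (simp add: frac_le)
        then have le: "1/Suc n < r" using n0 by (simp add: inverse_eq_divide)
        show "x \<notin> Nb n (FF k i)"
        proof
          assume "x \<in> Nb n (FF k i)"
          then obtain z where "z \<in> FF k i" "d x z < 1/Suc n" unfolding Nb_def by auto
          then have "z \<in> X.mball x r" using le x FM by auto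
          with r \<open>z \<in> FF k i\<close> show False by (auto simp: disjnt_def)
        qed
      qed
    qed
    show ?thesis unfolding Y.limitin_metric
    proof (intro conjI allI impI)
      show "f x \<in> Ty" using fT x by simp
      fix \<epsilon> :: real assume e: "\<epsilon> > 0"
      obtain K where K: "inverse (of_nat (Suc K)) < \<epsilon>/3" using reals_Archimedean[of "\<epsilon>/3"] e by auto
      then have K': "3 * (1/Suc K) < \<epsilon>" by (simp add: inverse_eq_divide)
      define A where "A = Max (a ` {..K})"
      have aA: "a j \<le> A" if "j \<le> K" for j unfolding A_def using that by auto
      have ev1: "eventually (\<lambda>n. \<forall>p\<in>{..K}\<times>{..A}. x \<in> Nb n (FF (fst p) (snd p)) \<longrightarrow> x \<in> FF (fst p) (snd p)) sequentially"
      proof (rule eventually_ball_finite)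
        show "finite ({..K}\<times>{..A})" by simp
        show "\<forall>p\<in>{..K} \<times> {..A}. \<forall>\<^sub>F n in sequentially. x \<in> Nb n (FF (fst p) (snd p)) \<longrightarrow> x \<in> FF (fst p) (snd p)"
        proof
          fix p
          show "\<forall>\<^sub>F n in sequentially. x \<in> Nb n (FF (fst p) (snd p)) \<longrightarrow> x \<in> FF (fst p) (snd p)"
          proof (cases "x \<in> FF (fst p) (snd p)")
            case True then show ?thesis by simp
          next
            case False show ?thesis using stab[OF False] by (rule eventually_mono) simp
          qed
        qed
      qed
      have ev2: "eventually (\<lambda>n. K \<le> n \<and> A \<le> n) sequentially"
        unfolding eventually_sequentially by (intro exI[of _ "max K A"]) auto
      show "\<forall>\<^sub>F n in sequentially. g n x \<in> Ty \<and> m (g n x) (f x) < \<epsilon>"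
        using eventually_conj[OF ev1 ev2]
      proof (rule eventually_mono)
        fix n assume H: "(\<forall>p\<in>{..K}\<times>{..A}. x \<in> Nb n (FF (fst p) (snd p)) \<longrightarrow> x \<in> FF (fst p) (snd p)) \<and> K \<le> n \<and> A \<le> n"
        have memj: "(j, a j) \<in> E n x" if "j \<le> K" for j
        proof -
          have "x \<in> Nb n (FF j (a j))" unfolding Nb_def using x ha[of j] by (auto intro!: bexI[of _ x])
          then show ?thesis unfolding E_def using that H aA[OF that] by auto
        qed
        have bj: "bb (E n x) j = a j" if j: "j \<le> K" for j
          unfolding bb_def
        proof (rule Least_equality)
          show "(j, a j) \<in> E n x" by (rule memj[OF j])
          fix y assume y: "(j, y) \<in> E n x"
          show "a j \<le> y"
          proof (rule ccontr)
            assume "\<not> a j \<le> y"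
            then have ya: "y < a j" by simp
            have "x \<in> Nb n (FF j y)" using y unfolding E_def by auto
            moreover have "(j,y) \<in> {..K}\<times>{..A}" using j ya aA[OF j] by auto
            ultimately have "x \<in> FF j y" using H by fastforce
            with hlt[OF ya] show False by simp
          qed
        qed
        have fx: "f x \<in> Ty" using fT x by simp
        have okK: "ok n (E n x) K" unfolding ok_def
        proof (intro conjI allI impI)
          show "K \<le> n" using H by simp
          fix j assume j: "j \<le> K"
          show "\<exists>i. (j, i) \<in> E n x" using memj[OF j] by blast
          have "m (cc j (a j)) (cc K (a K)) \<le> m (cc j (a j)) (f x) + m (f x) (cc K (a K))"
            using Y.triangle ccT fx by blast
          moreover have "m (cc j (a j)) (f x) < 1/Suc j" using approx ha by blast
          moreover have "m (f x) (cc K (a K)) < 1/Suc K" using approx ha Y.commute by metis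
          moreover have "1/Suc K \<le> 1/Suc j" using j by (simp add: frac_le)
          ultimately show "m (cc j (bb (E n x) j)) (cc K (bb (E n x) K)) \<le> 2 / real (Suc j)"
            using bj[OF j] bj[of K] by simp
        qed
        have okb: "k \<le> n" if "ok n (E n x) k" for k using that unfolding ok_def by simp
        define G where "G = (GREATEST k. ok n (E n x) k)"
        have okG: "ok n (E n x) G" unfolding G_def using okK okb by (rule GreatestI_nat)
        have KG: "K \<le> G" unfolding G_def using okK okb by (rule Greatest_le_nat)
        have geq: "g n x = cc G (bb (E n x) G)" unfolding g_def Phi_def G_def using okK by auto
        have "m (cc K (bb (E n x) K)) (cc G (bb (E n x) G)) \<le> 2/Suc K"
          using okG KG unfolding ok_def by blast
        then have d1: "m (g n x) (cc K (a K)) \<le> 2/Suc K" using geq bj[of K] Y.commute by simp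
        have d2: "m (cc K (a K)) (f x) < 1/Suc K" using approx ha by blast
        have "m (g n x) (f x) \<le> m (g n x) (cc K (a K)) + m (cc K (a K)) (f x)"
          using Y.triangle gT ccT fx by blast
        moreover have "2/Suc K = 2*(1/Suc K)" by simp
        ultimately have "m (g n x) (f x) < \<epsilon>" using d1 d2 K' by linarith
        then show "g n x \<in> Ty \<and> m (g n x) (f x) < \<epsilon>" using gT by simp
      qed
    qed
  qed
  show ?thesis using full conv by blast
qed



theorem mainTheorem1:
  fixes M :: "'a set" and d :: "'a \<Rightarrow> 'a \<Rightarrow> real"
    and Y :: "'b topology" and f :: "'a \<Rightarrow> 'b"
  assumes "ultrametric_space M d"
    and "metrizable_space Y" and "separable_space Y"
    and "f \<in> M \<rightarrow> topspace Y"
  shows "baire_class_1 (Metric_space.mtopology M d) Y f \<longleftrightarrow>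
    (\<exists>g :: nat \<Rightarrow> 'a \<Rightarrow> 'b. (\<forall>n. full_function M d Y (g n)) \<and>
       (\<forall>x\<in>M. limitin Y (\<lambda>n. g n x) (f x) sequentially))"
proof -
  have MX: "Metric_space M d" using assms(1) unfolding ultrametric_space_def by auto
  interpret X: Metric_space M d by fact
  obtain Ty m where MY: "Metric_space Ty m" and Yeq: "Y = Metric_space.mtopology Ty m"
    using assms(2) unfolding metrizable_space_def by blast
  interpret Y: Metric_space Ty m by fact
  have fT: "\<And>x. x \<in> M \<Longrightarrow> f x \<in> Ty" using assms(4) Yeq by auto
  show ?thesis
  proof
    assume R: "\<exists>g :: nat \<Rightarrow> 'a \<Rightarrow> 'b. (\<forall>n. full_function M d Y (g n)) \<and>
       (\<forall>x\<in>M. limitin Y (\<lambda>n. g n x) (f x) sequentially)"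
    then show "baire_class_1 (Metric_space.mtopology M d) Y f"
      using backward[OF MX MY Yeq] by blast
  next
    assume B: "baire_class_1 (Metric_space.mtopology M d) Y f"
    show "\<exists>g :: nat \<Rightarrow> 'a \<Rightarrow> 'b. (\<forall>n. full_function M d Y (g n)) \<and>
       (\<forall>x\<in>M. limitin Y (\<lambda>n. g n x) (f x) sequentially)"
    proof (cases "M = {}")
      case True
      then show ?thesis unfolding full_function_def by simp
    next
      case False
      then obtain x0 where x0: "x0 \<in> M" by blast
      obtain C where C: "countable C" "C \<subseteq> Ty" "Y closure_of C = Ty"
        using assms(3) Yeq unfolding separable_space_def by auto
      have dense: "\<exists>c\<in>C. m y c < e" if yT: "y \<in> Ty" and ep: "e > 0" for y e
      proof -
        have "y \<in> Y.mtopology closure_of C" using C(3) that Yeq by simp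
        then obtain c where "c \<in> C" "c \<in> Y.mball y e" using ep unfolding Y.metric_closure_of by blast
        then show ?thesis by auto
      qed
      define P where "P k c U = (countable U \<and> (\<forall>F\<in>U. closedin X.mtopology F) \<and>
            \<Union>U = {x\<in>M. f x \<in> Y.mball c (1/Suc k)})" for k :: nat and c U
      have exP: "\<exists>U. P k c U" for k c
      proof -
        have "openin Y (Y.mball c (1/Suc k))" unfolding Yeq by simp
        then have "fsigma_in X.mtopology {x\<in>M. f x \<in> Y.mball c (1/Suc k)}"
          using B unfolding baire_class_1_def by auto
        then obtain U where "countable U" "\<forall>F\<in>U. closedin X.mtopology F" "\<Union>U = {x\<in>M. f x \<in> Y.mball c (1/Suc k)}"
          unfolding fsigma_in_def union_of_def by auto
        then have "P k c U" unfolding P_def by simp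
        then show ?thesis by blast
      qed
      define Cl where "Cl k c = (SOME U. P k c U)" for k c
      have PCl: "P k c (Cl k c)" for k c unfolding Cl_def using exP by (rule someI_ex)
      define Fam where "Fam k = Sigma C (Cl k)" for k
      have cFam: "countable (Fam k)" for k
        unfolding Fam_def
      proof (rule countable_SIGMA)
        show "countable C" by (rule C(1))
        show "countable (Cl k c)" if "c \<in> C" for c using PCl[of k c] unfolding P_def by blast
      qed
      have coverFam: "\<exists>p\<in>Fam k. x \<in> snd p" if x: "x \<in> M" for k x
      proof -
        obtain c where c: "c \<in> C" "m (f x) c < 1/Suc k" using dense[of "f x" "1/Suc k"] fT x by auto
        then have "x \<in> \<Union>(Cl k c)" using PCl[of k c] x fT C(2) Y.commute unfolding P_def by auto
        then obtain F where "F \<in> Cl k c" "x \<in> F" by auto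
        then have "(c,F) \<in> Fam k" using c unfolding Fam_def by blast
        then show ?thesis using \<open>x \<in> F\<close> by (intro bexI[of _ "(c,F)"]) auto
      qed
      have sig: "fst p \<in> C \<and> snd p \<in> Cl k (fst p)" if "p \<in> Fam k" for p k
        using that unfolding Fam_def by (cases p) auto
      have neFam: "Fam k \<noteq> {}" for k using coverFam[OF x0] by auto
      define FF where "FF k i = snd (from_nat_into (Fam k) i)" for k i
      define cc where "cc k i = fst (from_nat_into (Fam k) i)" for k i
      have inFam: "from_nat_into (Fam k) i \<in> Fam k" for k i using neFam by (rule from_nat_into)
      have rng: "range (from_nat_into (Fam k)) = Fam k" for k using neFam cFam by (rule range_from_nat_into)
      have closedF: "closedin X.mtopology (FF k i)" for k i
      proof -
        have "snd (from_nat_into (Fam k) i) \<in> Cl k (fst (from_nat_into (Fam k) i))"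
          using sig[OF inFam[of k i]] by blast
        then show ?thesis using PCl[of k "fst (from_nat_into (Fam k) i)"] unfolding FF_def P_def by blast
      qed
      have cover: "\<exists>i. x \<in> FF k i" if xM: "x \<in> M" for k x
      proof -
        obtain p where "p \<in> Fam k" "x \<in> snd p" using coverFam[OF xM] by blast
        then obtain i where "from_nat_into (Fam k) i = p" using rng[of k] by (metis imageE)
        then show ?thesis unfolding FF_def using \<open>x \<in> snd p\<close> by blast
      qed
      have approx: "m (cc k i) (f x) < 1/Suc k" if "x \<in> FF k i" for k i x
      proof -
        have cin: "cc k i \<in> C" "FF k i \<in> Cl k (cc k i)"
          using sig[OF inFam[of k i]] unfolding FF_def cc_def by blast+
        then have "x \<in> \<Union>(Cl k (cc k i))" using that by auto
        moreover have "\<Union>(Cl k (cc k i)) = {x\<in>M. f x \<in> Y.mball (cc k i) (1/Suc k)}"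
          using PCl[of k "cc k i"] unfolding P_def by blast
        ultimately show ?thesis by simp
      qed
      have ccT: "cc k i \<in> Ty" for k i
        using sig[OF inFam[of k i]] C(2) unfolding cc_def by blast
      show ?thesis unfolding Yeq
        by (rule core[OF assms(1) MY closedF cover approx ccT fT[OF x0] fT])
    qed
  qed
qed

end
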